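(* Let $[R_1,\dots,R_L]$ be the rule vector of a one-dimensional linear null hybrid 90/150 cellular automaton and let $P_i(x)=\sum_j c^{(i)}_j x^j$ denote the characteristic polynomial of the sub-automaton $R_1R_2\cdots R_i$. For any evolution of the automaton, write $z_t=x_1^t$ for the sequence in the leftmost cell. Then for every $1\le i\le L$ and every $t$, $$x_i^t=\sum_j c^{(i-1)}_j\, z_{t+j}.$$ Consequently, if the cell-$i$ sequence $\{x_i^t\}$ is in turn placed as the leftmost-cell sequence of the same automaton and this is repeated, then after $n$ such steps the sequence obtained at cell $i$ is $\sum_j d_j z_{t+j}$, where $P_{i-1}(x)^n=\sum_j d_j x^j$ (coefficients in $GF(2)$). *)

theory Defs
  imports "HOL-Library.Z2" "Jordan_Normal_Form.Char_Poly"
begin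

text \<open>The rule vector is R :: nat => bit with R i = 0 meaning rule 90 and
  R i = 1 meaning rule 150 at cell i (cells numbered 1..L).\<close>

definition ca_evolution :: "nat \<Rightarrow> (nat \<Rightarrow> bit) \<Rightarrow> (nat \<Rightarrow> nat \<Rightarrow> bit) \<Rightarrow> bool" where
  "ca_evolution L R x \<longleftrightarrow>
     (\<forall>t. \<forall>i\<in>{1..L}.
        x (Suc t) i = (if i = 1 then 0 else x t (i - 1)) + R i * x t i
                      + (if i = L then 0 else x t (i + 1)))"

text \<open>Transition matrix (tridiagonal) of the sub-automaton R_1 R_2 ... R_i, 0-based indices.\<close>
definition sub_ca_matrix :: "(nat \<Rightarrow> bit) \<Rightarrow> nat \<Rightarrow> bit mat" where
  "sub_ca_matrix R i = mat i i (\<lambda>(a, b). if a = b then R (a + 1)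
                                   else if a = b + 1 \<or> b = a + 1 then 1 else 0)"

definition sub_ca_char_poly :: "(nat \<Rightarrow> bit) \<Rightarrow> nat \<Rightarrow> bit poly" where
  "sub_ca_char_poly R i = char_poly (sub_ca_matrix R i)"

definition poly_shift :: "bit poly \<Rightarrow> (nat \<Rightarrow> bit) \<Rightarrow> nat \<Rightarrow> bit" where
  "poly_shift p z t = (\<Sum>j\<le>degree p. coeff p j * z (t + j))"

end

theory Submission
  imports Defs
begin


lemma bitpoly_uminus[simp]: "- (p :: bit poly) = p"
  by (simp add: poly_eq_iff)

lemma bitpoly_minus[simp]: "(p :: bit poly) - q = p + q"
  by (simp add: poly_eq_iff)

definition TT :: "(nat \<Rightarrow> bit) \<Rightarrow> nat \<Rightarrow> bit poly mat" where
  "TT R n = char_poly_matrix (sub_ca_matrix R n)"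

lemma TT_carrier: "TT R n \<in> carrier_mat n n"
  unfolding TT_def sub_ca_matrix_def by (rule char_poly_matrix_closed) auto

lemma TT_dim[simp]: "dim_row (TT R n) = n" "dim_col (TT R n) = n"
  using TT_carrier[of R n] by auto

lemma TT_entry: "a < n \<Longrightarrow> b < n \<Longrightarrow> TT R n $$ (a,b) =
   (if a = b then [:R (a+1), 1:] else if a = b + 1 \<or> b = a + 1 then 1 else 0)"
  unfolding TT_def char_poly_matrix_def sub_ca_matrix_def
  by (auto simp: one_pCons)

lemma det_TT_rec: "det (TT R (Suc (Suc n))) = [:R (n+2), 1:] * det (TT R (Suc n)) + det (TT R n)"
proof -
  let ?A = "TT R (Suc (Suc n))"
  have A: "?A \<in> carrier_mat (Suc (Suc n)) (Suc (Suc n))" by (rule TT_carrier)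
  have "det ?A = (\<Sum>i<Suc (Suc n). ?A $$ (i, Suc n) * cofactor ?A i (Suc n))"
    by (rule laplace_expansion_column[OF A]) auto
  also have "\<dots> = ?A $$ (n, Suc n) * cofactor ?A n (Suc n) + ?A $$ (Suc n, Suc n) * cofactor ?A (Suc n) (Suc n)"
  proof -
    have "(\<Sum>i<Suc (Suc n). ?A $$ (i, Suc n) * cofactor ?A i (Suc n)) =
       (\<Sum>i<n. ?A $$ (i, Suc n) * cofactor ?A i (Suc n)) + ?A $$ (n, Suc n) * cofactor ?A n (Suc n) + ?A $$ (Suc n, Suc n) * cofactor ?A (Suc n) (Suc n)"
      by simp
    moreover have "(\<Sum>i<n. ?A $$ (i, Suc n) * cofactor ?A i (Suc n)) = 0"
      by (rule sum.neutral) (auto simp: TT_entry)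
    ultimately show ?thesis by simp
  qed
  finally have e1: "det ?A = ?A $$ (n, Suc n) * cofactor ?A n (Suc n) + ?A $$ (Suc n, Suc n) * cofactor ?A (Suc n) (Suc n)" .
  have d1: "mat_delete ?A (Suc n) (Suc n) = TT R (Suc n)"
    by (rule eq_matI) (auto simp: mat_delete_def TT_entry)
  have d2: "det (mat_delete ?A n (Suc n)) = det (TT R n)"
  proof -
    let ?B = "mat_delete ?A n (Suc n)"
    have B: "?B \<in> carrier_mat (Suc n) (Suc n)" using mat_delete_carrier[OF A] by simp
    have "det ?B = (\<Sum>j<Suc n. ?B $$ (n, j) * cofactor ?B n j)"
      by (rule laplace_expansion_row[OF B]) auto
    also have "\<dots> = ?B $$ (n, n) * cofactor ?B n n"
    proof -
      have "(\<Sum>j<Suc n. ?B $$ (n, j) * cofactor ?B n j) = (\<Sum>j<n. ?B $$ (n, j) * cofactor ?B n j) + ?B $$ (n, n) * cofactor ?B n n" by simp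
      moreover have "(\<Sum>j<n. ?B $$ (n, j) * cofactor ?B n j) = 0"
        by (rule sum.neutral) (auto simp: mat_delete_def TT_entry)
      ultimately show ?thesis by simp
    qed
    finally have f1: "det ?B = ?B $$ (n, n) * cofactor ?B n n" .
    have f2: "mat_delete ?B n n = TT R n"
      by (rule eq_matI) (auto simp: mat_delete_def TT_entry)
    have f3: "?B $$ (n, n) = 1"
      by (auto simp: mat_delete_def TT_entry)
    show ?thesis using f1 f2 f3 by (simp add: cofactor_def)
  qed
  have "?A $$ (n, Suc n) = 1" by (simp add: TT_entry)
  moreover have "?A $$ (Suc n, Suc n) = [:R (n+2), 1:]" by (simp add: TT_entry)
  ultimately show ?thesis using e1 d1 d2 by (simp add: cofactor_def add.commute)
qed

lemma P_rec: "sub_ca_char_poly R (Suc (Suc n)) = [:R (n+2), 1:] * sub_ca_char_poly R (Suc n) + sub_ca_char_poly R n"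
  using det_TT_rec unfolding sub_ca_char_poly_def char_poly_def TT_def .

lemma P0: "sub_ca_char_poly R 0 = 1"
  unfolding sub_ca_char_poly_def char_poly_def using TT_carrier[of R 0] unfolding TT_def by simp

lemma P1: "sub_ca_char_poly R 1 = [:R 1, 1:]"
proof -
  have "det (TT R 1) = TT R 1 $$ (0,0)" by (rule det_single) (rule TT_carrier)
  thus ?thesis unfolding sub_ca_char_poly_def char_poly_def TT_def[symmetric] by (simp add: TT_entry)
qed

lemma poly_shift_bound: "degree p \<le> N \<Longrightarrow> (\<Sum>j\<le>N. coeff p j * z (t + j)) = poly_shift p z t"
  unfolding poly_shift_def
  by (rule sum.mono_neutral_right) (auto simp: coeff_eq_0)

lemma poly_shift_0[simp]: "poly_shift 0 z t = 0"
  unfolding poly_shift_def by simp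

lemma poly_shift_pCons: "poly_shift (pCons a p) z t = a * z t + poly_shift p z (Suc t)"
proof -
  have "poly_shift (pCons a p) z t = (\<Sum>j\<le>Suc (degree p). coeff (pCons a p) j * z (t + j))"
    by (rule poly_shift_bound[symmetric]) (simp add: degree_pCons_le)
  also have "\<dots> = a * z t + (\<Sum>j\<le>degree p. coeff p j * z (Suc t + j))"
    by (subst sum.atMost_Suc_shift) simp
  finally show ?thesis unfolding poly_shift_def .
qed

lemma poly_shift_add: "poly_shift (p + q) z t = poly_shift p z t + poly_shift q z t"
proof -
  let ?N = "max (degree p) (degree q)"
  have "poly_shift (p + q) z t = (\<Sum>j\<le>?N. coeff (p + q) j * z (t + j))"
    by (rule poly_shift_bound[symmetric]) (simp add: degree_add_le)
  also have "\<dots> = (\<Sum>j\<le>?N. coeff p j * z (t + j)) + (\<Sum>j\<le>?N. coeff q j * z (t + j))"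
    by (simp only: coeff_add distrib_right sum.distrib)
  also have "\<dots> = poly_shift p z t + poly_shift q z t"
    by (simp only: poly_shift_bound[OF max.cobounded1] poly_shift_bound[OF max.cobounded2])
  finally show ?thesis .
qed

lemma poly_shift_smult: "poly_shift (Polynomial.smult a q) z t = a * poly_shift q z t"
proof -
  have "poly_shift (Polynomial.smult a q) z t = (\<Sum>j\<le>degree q. coeff (Polynomial.smult a q) j * z (t + j))"
    by (rule poly_shift_bound[symmetric]) (simp add: degree_smult_le)
  also have "\<dots> = a * poly_shift q z t"
    by (simp only: poly_shift_def coeff_smult sum_distrib_left mult.assoc)
  finally show ?thesis .
qed

lemma poly_shift_mult: "poly_shift (p * q) z t = poly_shift p (poly_shift q z) t"
proof (induction p arbitrary: t)
  case 0
  then show ?case by simp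
next
  case (pCons a p)
  have "pCons a p * q = Polynomial.smult a q + pCons 0 (p * q)" by simp
  then show ?case
    by (simp only: poly_shift_add poly_shift_smult poly_shift_pCons pCons.IH mult_zero_left add_0_left)
qed

lemma poly_shift_1: "poly_shift 1 z t = z t"
  by (simp add: one_pCons poly_shift_pCons)

lemma poly_shift_lin: "poly_shift [:a, 1:] z t = a * z t + z (Suc t)"
  by (simp only: poly_shift_pCons poly_shift_0 mult_1 add_0_right)

lemma bit_swap0: "(a::bit) = b + 0 + c \<Longrightarrow> a = c + b"
  by (cases a; cases b; cases c) auto

lemma bit_solve: "(a::bit) = b + c + d \<Longrightarrow> d = a + b + c"
  by (cases a; cases b; cases c; cases d) auto

lemma part1:
  assumes ev: "ca_evolution L R x"
  shows "\<forall>i\<in>{1..L}. \<forall>t. x t i = poly_shift (sub_ca_char_poly R (i - 1)) (\<lambda>s. x s 1) t"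
proof -
  let ?z = "\<lambda>s. x s 1"
  let ?P = "sub_ca_char_poly R"
  have step: "\<And>t i. i \<in> {1..L} \<Longrightarrow> x (Suc t) i = (if i = 1 then 0 else x t (i - 1)) + R i * x t i
                      + (if i = L then 0 else x t (i + 1))"
    using ev unfolding ca_evolution_def by blast
  have "(n + 1 \<le> L \<longrightarrow> (\<forall>t. x t (n+1) = poly_shift (?P n) ?z t)) \<and>
        (n + 2 \<le> L \<longrightarrow> (\<forall>t. x t (n+2) = poly_shift (?P (n+1)) ?z t))" for n
  proof (induction n)
    case 0
    have A: "\<forall>t. x t 1 = poly_shift (?P 0) ?z t" by (simp add: P0 poly_shift_1)
    have B: "\<forall>t. x t 2 = poly_shift (?P 1) ?z t" if "2 \<le> L"
    proof
      fix t
      have "1 \<in> {1..L}" "1 \<noteq> L" using that by auto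
      hence "x (Suc t) 1 = 0 + R 1 * x t 1 + x t (1+1)" using step[of 1 t] by (simp only: if_True if_False simp_thms)
      hence "x (Suc t) 1 = 0 + R 1 * x t 1 + x t 2" by (simp only: one_add_one)
      hence "x t 2 = x (Suc t) 1 + 0 + R 1 * x t 1" by (rule bit_solve)
      hence "x t 2 = R 1 * x t 1 + x (Suc t) 1" by (rule bit_swap0)
      thus "x t 2 = poly_shift (?P 1) ?z t" by (simp only: P1 poly_shift_lin)
    qed
    show ?case unfolding add_0 using A B by blast
  next
    case (Suc n)
    have B: "\<forall>t. x t (n+3) = poly_shift (?P (n+2)) ?z t" if "n + 3 \<le> L"
    proof
      fix t
      have "n+2 \<in> {1..L}" "n + 2 \<noteq> 1" "n+2 \<noteq> L" "n+2-1 = n+1" "n+2+1 = n+3" using that by auto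
      hence "x (Suc t) (n+2) = x t (n+1) + R (n+2) * x t (n+2) + x t (n+3)"
        using step[of "n+2" t] by (simp only: if_True if_False simp_thms)
      hence "x t (n+3) = x (Suc t) (n+2) + x t (n+1) + R (n+2) * x t (n+2)" by (rule bit_solve)
      also have "\<dots> = poly_shift (?P (n+1)) ?z (Suc t) + poly_shift (?P n) ?z t + R (n+2) * poly_shift (?P (n+1)) ?z t"
      proof -
        have "n + 1 \<le> L" "n + 2 \<le> L" using that by auto
        hence h1: "\<forall>t. x t (n+1) = poly_shift (?P n) ?z t" and h2: "\<forall>t. x t (n+2) = poly_shift (?P (n+1)) ?z t"
          using Suc.IH by auto
        show ?thesis by (simp only: h1 h2)
      qed
      also have "\<dots> = poly_shift (?P (n+2)) ?z t"
      proof -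
        have e: "n+2 = Suc (Suc n)" "n+1 = Suc n" by simp_all
        have "?P (n+2) = [:R (n+2), 1:] * ?P (n+1) + ?P n"
          unfolding e by (rule P_rec[of R n, unfolded e])
        thus ?thesis by (simp only: poly_shift_add poly_shift_mult poly_shift_lin add_ac)
      qed
      finally show "x t (n+3) = poly_shift (?P (n+2)) ?z t" .
    qed
    have e1: "Suc n + 1 = n + 2" "Suc n + 2 = n + 3" by simp_all
    have e2: "Suc n = n + 1" by simp
    show ?case unfolding e1 unfolding e2 using Suc.IH B by blast
  qed
  then have H: "\<And>n. n + 1 \<le> L \<longrightarrow> (\<forall>t. x t (n+1) = poly_shift (?P n) ?z t)" by blast
  show ?thesis
  proof (intro ballI allI)
    fix i t assume i: "i \<in> {1..L}"
    have e: "i - 1 + 1 = i" using i by auto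
    have "i \<le> L" using i by auto
    with H[of "i - 1", unfolded e] show "x t i = poly_shift (?P (i - 1)) ?z t" by blast
  qed
qed


theorem mainTheorem6:
  fixes L :: nat and R :: "nat \<Rightarrow> bit" and x :: "nat \<Rightarrow> nat \<Rightarrow> bit"
    and e :: "nat \<Rightarrow> nat \<Rightarrow> nat \<Rightarrow> bit"
  assumes "ca_evolution L R x"
  shows "(\<forall>i\<in>{1..L}. \<forall>t. x t i = poly_shift (sub_ca_char_poly R (i - 1)) (\<lambda>s. x s 1) t)
    \<and> (\<forall>i\<in>{1..L}.
         (\<forall>k. ca_evolution L R (e k))
         \<longrightarrow> (\<forall>s. e 0 s 1 = x s 1)
         \<longrightarrow> (\<forall>k s. e (Suc k) s 1 = e k s i)
         \<longrightarrow> (\<forall>n\<ge>1. \<forall>t. e (n - 1) t i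
                = poly_shift (sub_ca_char_poly R (i - 1) ^ n) (\<lambda>s. x s 1) t))"
proof (intro conjI ballI impI allI)
  show "\<And>i t. i \<in> {1..L} \<Longrightarrow> x t i = poly_shift (sub_ca_char_poly R (i - 1)) (\<lambda>s. x s 1) t"
    using part1[OF assms] by blast
next
  fix i n t :: nat
  assume i: "i \<in> {1..L}" and hev: "\<forall>k. ca_evolution L R (e k)"
    and h0: "\<forall>s. e 0 s 1 = x s 1" and hs: "\<forall>k s. e (Suc k) s 1 = e k s i" and n: "1 \<le> n"
  let ?P = "sub_ca_char_poly R (i - 1)"
  let ?z = "\<lambda>s. x s 1"
  have pk: "\<And>k t. e k t i = poly_shift ?P (\<lambda>s. e k s 1) t"
    using part1[OF hev[rule_format]] i by blast
  have z0: "(\<lambda>s. e 0 s 1) = ?z" using h0 by auto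
  have zs: "\<And>m. (\<lambda>s. e (Suc m) s 1) = (\<lambda>s. e m s i)" using hs by auto
  have ind: "\<forall>t. e m t i = poly_shift (?P ^ Suc m) ?z t" for m
  proof (induction m)
    case 0
    show ?case using pk[of 0] unfolding z0 power_Suc0_right by blast
  next
    case (Suc m)
    have "(\<lambda>s. e m s i) = poly_shift (?P ^ Suc m) ?z" using Suc.IH by auto
    then show ?case using pk[of "Suc m"] unfolding zs power_Suc[of ?P "Suc m"] poly_shift_mult
      by simp
  qed
  obtain m where m: "n = Suc m" using n by (cases n) auto
  show "e (n - 1) t i = poly_shift (?P ^ n) ?z t" using ind[of m] unfolding m diff_Suc_1 by blast
qed

end
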